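(* Let $W_\circ=\bigcup_{\lambda\in\Lambda^\circ}W(\lambda)$. Exactly one of the following holds: (a) if $\underline f<0<\overline f$, then $f(\lambda)=0$ has a unique solution $\hat\lambda\in\Lambda^\circ$ and $\widehat W=W_\circ=\{w(\hat\lambda)\}$; (b) if $\underline f=0=\overline f$, then $f(\lambda)=0$ for every $\lambda\in\Lambda^\circ$ and $\widehat W=W_\circ=\{0\}$; (c) in all other cases, $f(\lambda)=0$ has no solution in $\Lambda^\circ$ and $W_\circ=\emptyset$.
   Context: Regular dimension-reduced canonical form: $q\ge1$, $\gamma_1>\dots>\gamma_q$ nonzero reals with $\gamma_1>0$, $\Gamma^*=\operatorname{diag}(\gamma_1,\dots,\gamma_q)$, $\delta=(\delta_i)$ with $\delta_i\ge0$, $k^*\in\mathbb{R}$, $\varepsilon\ge0$; either ($m_0=0$) $\varepsilon=0$, $w=z\in\mathbb{R}^q$, $w_0=\delta$, $\Delta=\Gamma^*$, $d=0$; or ($m_0>0$) $\varepsilon>0$, $w=(y,z^\top)^\top\in\mathbb{R}^{q+1}$, $w_0=(0,\delta^\top)^\top$, $\Delta=\operatorname{diag}(0,\Gamma^* )$, $d=\varepsilon e_1$. Problem: minimise $\|w-w_0\|^2$ over $W=\{w:Q^*(w)=0\}\neq\emptyset$, $Q^*(w)=w^\top\Delta w+2d^\top w-k^*$; $\widehat W$ is the set of minimisers. Admissible region $\Lambda=(-\infty,\gamma_1^{-1}]$ if $\gamma_q>0$, $[\gamma_q^{-1},\gamma_1^{-1}]$ if $\gamma_q<0$; $\Lambda^\circ$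 its interior. $W(\lambda)$ is the set of $w\in W$ with $(I-\lambda\Delta)w=w_0+\lambda d$. For $\lambda\in\Lambda^\circ$, $w(\lambda)=(I-\lambda\Delta)^{-1}(w_0+\lambda d)$, $f(\lambda)=\sum_{i=1}^q(1-\lambda\gamma_i)^{-2}\gamma_i\delta_i^2+2\varepsilon^2\lambda-k^*$, $\underline f=\inf_{\Lambda^\circ}f$, $\overline f=\sup_{\Lambda^\circ}f$. *)

theory Defs
  imports "HOL-Analysis.Analysis"
begin

(* Vectors are modelled as functions nat => real supported on the index set idx.
   Case m0 = 0 (eps = 0): w = z in R^q, indices 1..q.
   Case m0 > 0 (eps > 0): w = (y, z) in R^(q+1), index 0 is y, indices 1..q are z. *)

definition idx :: "nat \<Rightarrow> real \<Rightarrow> nat set" where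
  "idx q eps = (if eps = 0 then {1..q} else {0..q})"

definition vecs :: "nat \<Rightarrow> real \<Rightarrow> (nat \<Rightarrow> real) set" where
  "vecs q eps = {w. \<forall>i. i \<notin> idx q eps \<longrightarrow> w i = 0}"

definition Delta :: "(nat \<Rightarrow> real) \<Rightarrow> nat \<Rightarrow> real" where
  "Delta gam i = (if i = 0 then 0 else gam i)"

definition wz :: "(nat \<Rightarrow> real) \<Rightarrow> nat \<Rightarrow> real" where
  "wz del i = (if i = 0 then 0 else del i)"

(* d = eps e_1 (the y-coordinate), resp. d = 0 *)
definition dvec :: "real \<Rightarrow> nat \<Rightarrow> real" where
  "dvec eps i = (if i = 0 then eps else 0)"

definition Qstar :: "nat \<Rightarrow> (nat \<Rightarrow> real) \<Rightarrow> real \<Rightarrow> real \<Rightarrow> (nat \<Rightarrow> real) \<Rightarrow> real" where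
  "Qstar q gam k eps w =
     (\<Sum>i\<in>idx q eps. Delta gam i * (w i)^2) + 2 * (\<Sum>i\<in>idx q eps. dvec eps i * w i) - k"

definition Wset :: "nat \<Rightarrow> (nat \<Rightarrow> real) \<Rightarrow> real \<Rightarrow> real \<Rightarrow> (nat \<Rightarrow> real) set" where
  "Wset q gam k eps = {w \<in> vecs q eps. Qstar q gam k eps w = 0}"

definition obj :: "nat \<Rightarrow> (nat \<Rightarrow> real) \<Rightarrow> real \<Rightarrow> (nat \<Rightarrow> real) \<Rightarrow> real" where
  "obj q del eps w = (\<Sum>i\<in>idx q eps. (w i - wz del i)^2)"

definition What :: "nat \<Rightarrow> (nat \<Rightarrow> real) \<Rightarrow> (nat \<Rightarrow> real) \<Rightarrow> real \<Rightarrow> real \<Rightarrow> (nat \<Rightarrow> real) set" where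
  "What q gam del k eps =
     {w \<in> Wset q gam k eps. \<forall>v\<in>Wset q gam k eps. obj q del eps w \<le> obj q del eps v}"

definition Lam :: "nat \<Rightarrow> (nat \<Rightarrow> real) \<Rightarrow> real set" where
  "Lam q gam = (if gam q > 0 then {..1 / gam 1} else {1 / gam q .. 1 / gam 1})"

definition Wlam :: "nat \<Rightarrow> (nat \<Rightarrow> real) \<Rightarrow> (nat \<Rightarrow> real) \<Rightarrow> real \<Rightarrow> real \<Rightarrow> real \<Rightarrow> (nat \<Rightarrow> real) set" where
  "Wlam q gam del k eps lam =
     {w \<in> Wset q gam k eps. \<forall>i\<in>idx q eps.
        (1 - lam * Delta gam i) * w i = wz del i + lam * dvec eps i}"

definition Wcirc :: "nat \<Rightarrow> (nat \<Rightarrow> real) \<Rightarrow> (nat \<Rightarrow> real) \<Rightarrow> real \<Rightarrow> real \<Rightarrow> (nat \<Rightarrow> real) set" where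
  "Wcirc q gam del k eps = (\<Union>lam\<in>interior (Lam q gam). Wlam q gam del k eps lam)"

definition wfun :: "nat \<Rightarrow> (nat \<Rightarrow> real) \<Rightarrow> (nat \<Rightarrow> real) \<Rightarrow> real \<Rightarrow> real \<Rightarrow> nat \<Rightarrow> real" where
  "wfun q gam del eps lam = (\<lambda>i. if i \<in> idx q eps
       then (wz del i + lam * dvec eps i) / (1 - lam * Delta gam i) else 0)"

definition ff :: "nat \<Rightarrow> (nat \<Rightarrow> real) \<Rightarrow> (nat \<Rightarrow> real) \<Rightarrow> real \<Rightarrow> real \<Rightarrow> real \<Rightarrow> real" where
  "ff q gam del k eps lam =
     (\<Sum>i=1..q. gam i * (del i)^2 / (1 - lam * gam i)^2) + 2 * eps^2 * lam - k"

definition f_inf :: "nat \<Rightarrow> (nat \<Rightarrow> real) \<Rightarrow> (nat \<Rightarrow> real) \<Rightarrow> real \<Rightarrow> real \<Rightarrow> ereal" where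
  "f_inf q gam del k eps = (INF lam\<in>interior (Lam q gam). ereal (ff q gam del k eps lam))"

definition f_sup :: "nat \<Rightarrow> (nat \<Rightarrow> real) \<Rightarrow> (nat \<Rightarrow> real) \<Rightarrow> real \<Rightarrow> real \<Rightarrow> ereal" where
  "f_sup q gam del k eps = (SUP lam\<in>interior (Lam q gam). ereal (ff q gam del k eps lam))"

end

theory Submission
  imports Defs
begin

lemma term_mono:
  fixes l m g d :: real
  assumes "l < m" "1 - l*g > 0" "1 - m*g > 0"
  shows "g*d^2/(1-l*g)^2 \<le> g*d^2/(1-m*g)^2"
    and "g \<noteq> 0 \<Longrightarrow> d \<noteq> 0 \<Longrightarrow> g*d^2/(1-l*g)^2 < g*d^2/(1-m*g)^2"
proof -
  define a where "a = 1 - l*g"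
  define b where "b = 1 - m*g"
  have a: "a > 0" and b: "b > 0" using assms by (auto simp: a_def b_def)
  have ab: "a - b = (m-l)*g" by (simp add: a_def b_def algebra_simps)
  have eq0: "g*d^2/b^2 - g*d^2/a^2 = g*d^2 * (a-b) * (a+b) / (a^2*b^2)"
    using a b by (simp add: field_simps power2_eq_square)
  have eq: "g*d^2/b^2 - g*d^2/a^2 = d^2 * (m-l) * g^2 * (a+b) / (a^2*b^2)"
    unfolding eq0 ab by (simp add: power2_eq_square algebra_simps)
  have "d^2 * (m-l) * g^2 * (a+b) / (a^2*b^2) \<ge> 0" using a b assms(1) by simp
  then show "g*d^2/(1-l*g)^2 \<le> g*d^2/(1-m*g)^2" using eq by (simp add: a_def b_def)
  assume "g \<noteq> 0" "d \<noteq> 0"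
  then have "d^2 * (m-l) * g^2 * (a+b) / (a^2*b^2) > 0" using a b assms(1) by simp
  then show "g*d^2/(1-l*g)^2 < g*d^2/(1-m*g)^2" using eq by (simp add: a_def b_def)
qed

definition posI :: "nat \<Rightarrow> (nat \<Rightarrow> real) \<Rightarrow> real \<Rightarrow> bool" where
  "posI q gam l = (\<forall>i. 1 \<le> i \<and> i \<le> q \<longrightarrow> 1 - l * gam i > 0)"

lemma ff_mono:
  assumes "posI q gam l" "posI q gam m" "l < m"
  shows "ff q gam del k eps l \<le> ff q gam del k eps m"
proof -
  have "(\<Sum>i=1..q. gam i * (del i)^2 / (1 - l * gam i)^2) \<le> (\<Sum>i=1..q. gam i * (del i)^2 / (1 - m * gam i)^2)"
    by (rule sum_mono) (use assms term_mono(1) in \<open>auto simp: posI_def\<close>)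
  moreover have "2*eps^2*l \<le> 2*eps^2*m" using assms(3) by (simp add: mult_left_mono)
  ultimately show ?thesis unfolding ff_def by linarith
qed

lemma ff_strict:
  assumes "posI q gam l" "posI q gam m" "l < m"
    and nz: "\<And>i. 1 \<le> i \<Longrightarrow> i \<le> q \<Longrightarrow> gam i \<noteq> 0"
    and nd: "\<not> ((\<forall>i\<in>{1..q}. del i = 0) \<and> eps = 0)"
  shows "ff q gam del k eps l < ff q gam del k eps m"
proof (cases "eps = 0")
  case True
  then obtain j where j: "j \<in> {1..q}" "del j \<noteq> 0" using nd by auto
  have "(\<Sum>i=1..q. gam i * (del i)^2 / (1 - l * gam i)^2) < (\<Sum>i=1..q. gam i * (del i)^2 / (1 - m * gam i)^2)"
    apply (rule sum_strict_mono_ex1)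
      apply simp
    using assms term_mono(1) apply (auto simp: posI_def)[1]
    using j assms term_mono(2)[of l m "gam j" "del j"] by (auto simp: posI_def)
  then show ?thesis unfolding ff_def using True by simp
next
  case False
  have "(\<Sum>i=1..q. gam i * (del i)^2 / (1 - l * gam i)^2) \<le> (\<Sum>i=1..q. gam i * (del i)^2 / (1 - m * gam i)^2)"
    by (rule sum_mono) (use assms term_mono(1) in \<open>auto simp: posI_def\<close>)
  moreover have "2*eps^2*l < 2*eps^2*m" using assms(3) False by simp
  ultimately show ?thesis unfolding ff_def by linarith
qed

lemma ff_const:
  assumes "\<forall>i\<in>{1..q}. del i = 0" "eps = 0"
  shows "ff q gam del k eps l = - k"
  using assms by (simp add: ff_def)

lemma idx_cases: "i \<in> idx q eps \<Longrightarrow> i = 0 \<or> (1 \<le> i \<and> i \<le> q)"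
  by (auto simp: idx_def split: if_splits)

lemma a_pos: "posI q gam l \<Longrightarrow> i \<in> idx q eps \<Longrightarrow> 1 - l * Delta gam i > 0"
  using idx_cases[of i q eps] by (auto simp: posI_def Delta_def)

lemma finite_idx[simp]: "finite (idx q eps)" by (simp add: idx_def)

lemma Qstar_wfun:
  assumes "posI q gam l"
  shows "Qstar q gam k eps (wfun q gam del eps l) = ff q gam del k eps l"
proof (cases "eps = 0")
  case True
  have "Qstar q gam k eps (wfun q gam del eps l) =
      (\<Sum>i=1..q. gam i * (del i)^2 / (1 - l * gam i)^2) - k"
    unfolding Qstar_def using True
    by (simp add: idx_def Delta_def dvec_def wfun_def wz_def power_divide)
  then show ?thesis using True by (simp add: ff_def)
next
  case False
  have s1: "(\<Sum>i\<in>{0..q}. Delta gam i * (wfun q gam del eps l i)^2) =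
      (\<Sum>i=1..q. gam i * (del i)^2 / (1 - l * gam i)^2)"
    by (simp add: sum.atLeast_Suc_atMost Delta_def wfun_def idx_def False wz_def dvec_def power_divide)
  have s2: "(\<Sum>i\<in>{0..q}. dvec eps i * wfun q gam del eps l i) = eps * (l * eps)"
    by (simp add: sum.atLeast_Suc_atMost Delta_def wfun_def idx_def False wz_def dvec_def)
  show ?thesis unfolding Qstar_def ff_def using False s1 s2
    by (simp add: idx_def power2_eq_square)
qed

lemma wfun_vecs: "wfun q gam del eps l \<in> vecs q eps"
  by (simp add: vecs_def wfun_def)

lemma Wlam_eq:
  assumes "posI q gam l"
  shows "Wlam q gam del k eps l = (if ff q gam del k eps l = 0 then {wfun q gam del eps l} else {})"
proof -
  have "w \<in> Wlam q gam del k eps l \<longleftrightarrow> w = wfun q gam del eps l \<and> ff q gam del k eps l = 0" for w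
  proof
    assume w: "w \<in> Wlam q gam del k eps l"
    have "w i = wfun q gam del eps l i" for i
    proof (cases "i \<in> idx q eps")
      case True
      then have "(1 - l * Delta gam i) * w i = wz del i + l * dvec eps i"
        using w by (auto simp: Wlam_def)
      then show ?thesis using a_pos[OF assms True] True
        by (simp add: wfun_def field_simps)
    next
      case False
      then show ?thesis using w by (auto simp: Wlam_def Wset_def vecs_def wfun_def)
    qed
    then have "w = wfun q gam del eps l" by auto
    then show "w = wfun q gam del eps l \<and> ff q gam del k eps l = 0"
      using w Qstar_wfun[OF assms] by (auto simp: Wlam_def Wset_def)
  next
    assume "w = wfun q gam del eps l \<and> ff q gam del k eps l = 0"
    moreover have "\<forall>i\<in>idx q eps. (1 - l * Delta gam i) * wfun q gam del eps l i = wz del i + l * dvec eps i"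
    proof
      fix i assume i: "i \<in> idx q eps"
      then have "1 - l * Delta gam i \<noteq> 0" using a_pos[OF assms i] by simp
      then show "(1 - l * Delta gam i) * wfun q gam del eps l i = wz del i + l * dvec eps i"
        using i by (simp add: wfun_def)
    qed
    ultimately show "w \<in> Wlam q gam del k eps l"
      using Qstar_wfun[OF assms, where k=k and del=del and eps=eps] wfun_vecs
      by (auto simp: Wlam_def Wset_def)
  qed
  then show ?thesis by auto
qed

lemma obj_decomp:
  fixes q :: nat and gam del :: "nat \<Rightarrow> real" and eps l :: real and w :: "nat \<Rightarrow> real"
  assumes "posI q gam l"
  defines "vf \<equiv> wfun q gam del eps l"
  shows "obj q del eps w = (\<Sum>i\<in>idx q eps. (1 - l * Delta gam i) * (w i - vf i)^2)
     + (\<Sum>i\<in>idx q eps. (wz del i)^2 - (1 - l * Delta gam i) * (vf i)^2)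
     + l * ((\<Sum>i\<in>idx q eps. Delta gam i * (w i)^2) + 2 * (\<Sum>i\<in>idx q eps. dvec eps i * w i))"
proof -
  have pt: "(w i - wz del i)^2 = (1 - l * Delta gam i) * (w i - vf i)^2
     + ((wz del i)^2 - (1 - l * Delta gam i) * (vf i)^2)
     + l * (Delta gam i * (w i)^2 + 2 * (dvec eps i * w i))" if i: "i \<in> idx q eps" for i
  proof -
    have a: "1 - l * Delta gam i \<noteq> 0" using a_pos[OF assms(1) i] by simp
    have h: "(1 - l * Delta gam i) * vf i = wz del i + l * dvec eps i"
      using a i by (simp add: vf_def wfun_def)
    have h': "wz del i = vf i - l * Delta gam i * vf i - l * dvec eps i"
      using h by (simp add: algebra_simps)
    show ?thesis
      unfolding h' by (simp add: power2_eq_square algebra_simps)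
  qed
  have "obj q del eps w = (\<Sum>i\<in>idx q eps. (1 - l * Delta gam i) * (w i - vf i)^2
     + ((wz del i)^2 - (1 - l * Delta gam i) * (vf i)^2)
     + l * (Delta gam i * (w i)^2 + 2 * (dvec eps i * w i)))"
    unfolding obj_def by (rule sum.cong) (auto simp: pt)
  then show ?thesis by (simp add: sum.distrib sum_distrib_left[symmetric])
qed

lemma What_eq:
  assumes pI: "posI q gam l" and z: "ff q gam del k eps l = 0"
  shows "What q gam del k eps = {wfun q gam del eps l}"
proof -
  define vf where "vf = wfun q gam del eps l"
  define C where "C = (\<Sum>i\<in>idx q eps. (wz del i)^2 - (1 - l * Delta gam i) * (vf i)^2)"
  have vfW: "vf \<in> Wset q gam k eps"
    using Qstar_wfun[OF pI, where k=k and del=del and eps=eps] z wfun_vecs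
    by (simp add: Wset_def vf_def)
  have objW: "obj q del eps w = (\<Sum>i\<in>idx q eps. (1 - l * Delta gam i) * (w i - vf i)^2) + C + l * k"
    if "w \<in> Wset q gam k eps" for w
  proof -
    have "(\<Sum>i\<in>idx q eps. Delta gam i * (w i)^2) + 2 * (\<Sum>i\<in>idx q eps. dvec eps i * w i) = k"
      using that by (simp add: Wset_def Qstar_def)
    then show ?thesis using obj_decomp[OF pI, where del=del and w=w and eps=eps]
      by (simp add: vf_def C_def)
  qed
  have apos: "\<And>i. i \<in> idx q eps \<Longrightarrow> 1 - l * Delta gam i > 0" using a_pos[OF pI] by blast
  have tnn: "\<And>i w. i \<in> idx q eps \<Longrightarrow> (1 - l * Delta gam i) * (w i - vf i)^2 \<ge> 0"
    using apos by (simp add: less_imp_le)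
  have nn: "(\<Sum>i\<in>idx q eps. (1 - l * Delta gam i) * (w i - vf i)^2) \<ge> 0" for w
    by (rule sum_nonneg) (use tnn in auto)
  have objvf: "obj q del eps vf = C + l * k" using objW[OF vfW] by simp
  show ?thesis
  proof (intro equalityI subsetI)
    fix w assume w: "w \<in> What q gam del k eps"
    then have wW: "w \<in> Wset q gam k eps" and le: "obj q del eps w \<le> obj q del eps vf"
      using vfW by (auto simp: What_def)
    have "(\<Sum>i\<in>idx q eps. (1 - l * Delta gam i) * (w i - vf i)^2) = 0"
      using le objW[OF wW] objvf nn[of w] by linarith
    then have "\<forall>i\<in>idx q eps. (1 - l * Delta gam i) * (w i - vf i)^2 = 0"
      by (subst (asm) sum_nonneg_eq_0_iff) (use tnn in auto)
    then have "\<forall>i\<in>idx q eps. w i = vf i" using apos by fastforce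
    moreover have "\<forall>i. i \<notin> idx q eps \<longrightarrow> w i = vf i"
      using wW by (auto simp: Wset_def vecs_def vf_def wfun_def)
    ultimately have "w = vf" by (metis ext)
    then show "w \<in> {wfun q gam del eps l}" by (simp add: vf_def)
  next
    fix w assume "w \<in> {wfun q gam del eps l}"
    then have "w = vf" by (simp add: vf_def)
    then show "w \<in> What q gam del k eps"
      using vfW objW objvf nn by (fastforce simp: What_def)
  qed
qed

lemma I_eq: "interior (Lam q gam) = (if gam q > 0 then {..<1/gam 1} else {1/gam q<..<1/gam 1})"
  by (simp add: Lam_def)

lemma I_pos:
  assumes "q \<ge> 1"
    and ord: "\<And>i j. 1 \<le> i \<Longrightarrow> i < j \<Longrightarrow> j \<le> q \<Longrightarrow> gam i > gam j"
    and nz: "\<And>i. 1 \<le> i \<Longrightarrow> i \<le> q \<Longrightarrow> gam i \<noteq> 0"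
    and g1: "gam 1 > 0"
    and l: "l \<in> interior (Lam q gam)"
  shows "posI q gam l"
  unfolding posI_def
proof (intro allI impI)
  fix i assume i: "1 \<le> i \<and> i \<le> q"
  have le1: "gam i \<le> gam 1" using ord[of 1 i] i by (cases "i = 1") auto
  have leq: "gam q \<le> gam i" using ord[of i q] i by (cases "i = q") auto
  have lt1: "l < 1 / gam 1" using l by (auto simp: I_eq split: if_splits)
  then have lg1: "l * gam 1 < 1" using g1 by (simp add: less_divide_eq)
  show "1 - l * gam i > 0"
  proof (cases "gam i > 0")
    case True
    show ?thesis
    proof (cases "l \<le> 0")
      case True
      then have "l * gam i \<le> 0" using \<open>gam i > 0\<close> by (simp add: mult_nonpos_nonneg)
      then show ?thesis by simp
    next
      case False
      then have "l * gam i \<le> l * gam 1" using le1 by (simp add: mult_left_mono)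
      then show ?thesis using lg1 by simp
    qed
  next
    case False
    then have gi: "gam i < 0" using nz i by force
    then have gq: "gam q < 0" using leq by simp
    then have "1 / gam q < l" using l by (auto simp: I_eq)
    then have lgq: "l * gam q < 1" using gq by (simp add: divide_less_eq)
    show ?thesis
    proof (cases "l \<ge> 0")
      case True
      then have "l * gam i \<le> 0" using gi by (simp add: mult_nonneg_nonpos)
      then show ?thesis by simp
    next
      case False
      then have "l * gam i \<le> l * gam q" using leq by (simp add: mult_left_mono_neg)
      then show ?thesis using lgq by simp
    qed
  qed
qed

lemma I_interval:
  assumes "a \<in> interior (Lam q gam)" "b \<in> interior (Lam q gam)" "a \<le> x" "x \<le> b"
  shows "x \<in> interior (Lam q gam)"
  using assms by (auto simp: I_eq split: if_splits)

lemma I_zero: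
  assumes "q \<ge> 1" "\<And>i. 1 \<le> i \<Longrightarrow> i \<le> q \<Longrightarrow> gam i \<noteq> 0" "gam 1 > 0"
  shows "0 \<in> interior (Lam q gam)"
proof -
  have "gam q \<noteq> 0" using assms by simp
  then show ?thesis using assms(3) by (auto simp: I_eq)
qed

lemma I_ball:
  assumes "l \<in> interior (Lam q gam)"
  obtains e where "e > 0" "l - e \<in> interior (Lam q gam)" "l + e \<in> interior (Lam q gam)"
proof -
  obtain e where e: "e > 0" "ball l e \<subseteq> interior (Lam q gam)"
    using openE[OF open_interior assms] by blast
  have "l - e/2 \<in> ball l e" "l + e/2 \<in> ball l e" using e(1) by (auto simp: dist_real_def)
  then have "l - e/2 \<in> interior (Lam q gam)" "l + e/2 \<in> interior (Lam q gam)" using e(2) by auto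
  then show ?thesis using that[of "e/2"] e(1) by auto
qed

lemma ff_isCont:
  assumes "posI q gam x"
  shows "isCont (ff q gam del k eps) x"
proof -
  have "\<forall>i\<in>{1..q}. (1 - x * gam i)^2 \<noteq> 0" using assms by (auto simp: posI_def)
  then show ?thesis unfolding ff_def by (intro continuous_intros) auto
qed

theorem proposition8p2:
  fixes q :: nat and gam del :: "nat \<Rightarrow> real" and k eps :: real
  assumes "q \<ge> 1"
    and "\<And>i j. 1 \<le> i \<Longrightarrow> i < j \<Longrightarrow> j \<le> q \<Longrightarrow> gam i > gam j"
    and "\<And>i. 1 \<le> i \<Longrightarrow> i \<le> q \<Longrightarrow> gam i \<noteq> 0"
    and "gam 1 > 0"
    and "\<And>i. 1 \<le> i \<Longrightarrow> i \<le> q \<Longrightarrow> del i \<ge> 0"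
    and "eps \<ge> 0"
    and "Wset q gam k eps \<noteq> {}"
  shows
    "(f_inf q gam del k eps < 0 \<and> 0 < f_sup q gam del k eps \<longrightarrow>
        (\<exists>lh\<in>interior (Lam q gam). ff q gam del k eps lh = 0
           \<and> (\<forall>l\<in>interior (Lam q gam). ff q gam del k eps l = 0 \<longrightarrow> l = lh)
           \<and> What q gam del k eps = Wcirc q gam del k eps
           \<and> Wcirc q gam del k eps = {wfun q gam del eps lh}))
   \<and> (f_inf q gam del k eps = 0 \<and> f_sup q gam del k eps = 0 \<longrightarrow>
        (\<forall>l\<in>interior (Lam q gam). ff q gam del k eps l = 0)
        \<and> What q gam del k eps = Wcirc q gam del k eps
        \<and> Wcirc q gam del k eps = {(\<lambda>_. 0)})
   \<and> (\<not> (f_inf q gam del k eps < 0 \<and> 0 < f_sup q gam del k eps)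
       \<and> \<not> (f_inf q gam del k eps = 0 \<and> f_sup q gam del k eps = 0) \<longrightarrow>
        (\<forall>l\<in>interior (Lam q gam). ff q gam del k eps l \<noteq> 0)
        \<and> Wcirc q gam del k eps = {})"
proof -
  note A = assms
  define I where "I = interior (Lam q gam)"
  define F where "F = ff q gam del k eps"
  define deg where "deg = ((\<forall>i\<in>{1..q}. del i = 0) \<and> eps = 0)"
  have pos: "\<And>l. l \<in> I \<Longrightarrow> posI q gam l"
    unfolding I_def by (rule I_pos[where q=q and gam=gam, OF A(1) A(2) A(3) A(4)]) auto
  have zI: "0 \<in> I" unfolding I_def by (rule I_zero[where q=q and gam=gam, OF A(1) A(3) A(4)]) auto
  have mono: "F l \<le> F m" if "l \<in> I" "m \<in> I" "l < m" for l m
    unfolding F_def by (rule ff_mono[OF pos[OF that(1)] pos[OF that(2)] that(3)])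
  have strict: "F l < F m" if "\<not> deg" "l \<in> I" "m \<in> I" "l < m" for l m
    unfolding F_def by (rule ff_strict[OF pos[OF that(2)] pos[OF that(3)] that(4) A(3)])
      (use that(1) in \<open>simp_all add: deg_def\<close>)
  have const: "F l = - k" if "deg" for l
    unfolding F_def by (rule ff_const) (use that in \<open>simp_all add: deg_def\<close>)
  have Wc: "Wcirc q gam del k eps = wfun q gam del eps ` {l \<in> I. F l = 0}"
    unfolding Wcirc_def I_def[symmetric] F_def
    using Wlam_eq[OF pos] by (auto split: if_splits)
  have finf: "f_inf q gam del k eps = (INF l\<in>I. ereal (F l))"
    by (simp add: f_inf_def I_def F_def)
  have fsup: "f_sup q gam del k eps = (SUP l\<in>I. ereal (F l))"
    by (simp add: f_sup_def I_def F_def)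
  have nd_zero: "\<And>l0. \<not> deg \<Longrightarrow> l0 \<in> I \<Longrightarrow> F l0 = 0 \<Longrightarrow>
      f_inf q gam del k eps < 0 \<and> 0 < f_sup q gam del k eps"
  proof -
    fix l0 assume nd: "\<not> deg" and l0: "l0 \<in> I" and z: "F l0 = 0"
    obtain e where e: "e > 0" "l0 - e \<in> I" "l0 + e \<in> I"
      using I_ball l0 unfolding I_def by blast
    have "F (l0 - e) < 0" using strict[OF nd e(2) l0] e(1) z by simp
    then have m1: "ereal (F (l0 - e)) < 0" by simp
    have "F (l0 + e) > 0" using strict[OF nd l0 e(3)] e(1) z by simp
    then have m2: "0 < ereal (F (l0 + e))" by simp
    moreover have "(INF l\<in>I. ereal (F l)) \<le> ereal (F (l0 - e))" by (rule INF_lower) (rule e(2))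
    moreover have "ereal (F (l0 + e)) \<le> (SUP l\<in>I. ereal (F l))" by (rule SUP_upper) (rule e(3))
    ultimately show "f_inf q gam del k eps < 0 \<and> 0 < f_sup q gam del k eps"
      unfolding finf fsup using m1 m2 by (meson le_less_trans less_le_trans)
  qed
  have deg_zero: "\<And>l0. deg \<Longrightarrow> l0 \<in> I \<Longrightarrow> F l0 = 0 \<Longrightarrow>
      f_inf q gam del k eps = 0 \<and> f_sup q gam del k eps = 0"
  proof -
    fix l0 assume d: deg and l0: "l0 \<in> I" and z: "F l0 = 0"
    have F0: "\<And>l. F l = 0" using const[OF d] const[OF d, of l0] z by simp
    have ne: "I \<noteq> {}" using zI by blast
    have "(INF l\<in>I. ereal (F l)) = (INF l\<in>I. (0::ereal))" by (simp add: F0 zero_ereal_def)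
    also have "\<dots> = 0" using ne by (rule INF_const)
    finally have i0: "(INF l\<in>I. ereal (F l)) = 0" .
    have "(SUP l\<in>I. ereal (F l)) = (SUP l\<in>I. (0::ereal))" by (simp add: F0 zero_ereal_def)
    also have "\<dots> = 0" using ne by (rule SUP_const)
    finally have s0: "(SUP l\<in>I. ereal (F l)) = 0" .
    show "f_inf q gam del k eps = 0 \<and> f_sup q gam del k eps = 0"
      unfolding finf fsup using i0 s0 by simp
  qed
  show ?thesis
  proof (intro conjI impI)
    assume h: "f_inf q gam del k eps < 0 \<and> 0 < f_sup q gam del k eps"
    obtain l1 where l1: "l1 \<in> I" "ereal (F l1) < 0"
      using h unfolding finf by (auto simp: INF_less_iff)
    obtain l2 where l2: "l2 \<in> I" "0 < ereal (F l2)"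
      using h unfolding fsup by (auto simp: less_SUP_iff)
    have F1: "F l1 < 0" "F l2 > 0" using l1 l2 by auto
    have nd: "\<not> deg"
    proof
      assume deg
      then have "F l1 = F l2" using const by simp
      then show False using F1 by simp
    qed
    have "l1 < l2"
    proof (rule ccontr)
      assume "\<not> l1 < l2"
      then have "l2 \<le> l1" by simp
      then have "F l2 \<le> F l1" using mono[OF l2(1) l1(1)] by (cases "l2 = l1") auto
      then show False using F1 by simp
    qed
    have "\<exists>x. l1 \<le> x \<and> x \<le> l2 \<and> F x = 0"
    proof (rule IVT)
      show "F l1 \<le> 0" "0 \<le> F l2" using F1 by auto
      show "l1 \<le> l2" using \<open>l1 < l2\<close> by simp
      show "\<forall>x. l1 \<le> x \<and> x \<le> l2 \<longrightarrow> isCont F x"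
      proof (intro allI impI)
        fix x assume "l1 \<le> x \<and> x \<le> l2"
        then have "x \<in> I" using I_interval[of l1 q gam l2 x] l1(1) l2(1) unfolding I_def by simp
        then show "isCont F x" unfolding F_def by (rule ff_isCont[OF pos])
      qed
    qed
    then obtain lh where lh0: "l1 \<le> lh" "lh \<le> l2" "F lh = 0" by blast
    then have lh: "lh \<in> I" "F lh = 0"
      using I_interval[of l1 q gam l2 lh] l1(1) l2(1) unfolding I_def by simp_all
    have uniq: "\<And>l. l \<in> I \<Longrightarrow> F l = 0 \<Longrightarrow> l = lh"
    proof -
      fix l assume l: "l \<in> I" "F l = 0"
      show "l = lh"
      proof (rule ccontr)
        assume "l \<noteq> lh"
        then consider "l < lh" | "lh < l" by linarith
        then show False
        proof cases
          case 1
          from strict[OF nd l(1) lh(1) this] show False using l(2) lh(2) by simp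
        next
          case 2
          from strict[OF nd lh(1) l(1) this] show False using l(2) lh(2) by simp
        qed
      qed
    qed
    have Z: "{l \<in> I. F l = 0} = {lh}" using uniq lh by blast
    have Wh: "Wcirc q gam del k eps = {wfun q gam del eps lh}"
      unfolding Wc Z by simp
    show "\<exists>lh\<in>interior (Lam q gam). ff q gam del k eps lh = 0
           \<and> (\<forall>l\<in>interior (Lam q gam). ff q gam del k eps l = 0 \<longrightarrow> l = lh)
           \<and> What q gam del k eps = Wcirc q gam del k eps
           \<and> Wcirc q gam del k eps = {wfun q gam del eps lh}"
    proof (rule bexI[of _ lh])
      have WE: "What q gam del k eps = {wfun q gam del eps lh}"
        by (rule What_eq[OF pos[OF lh(1)]]) (use lh(2) in \<open>simp add: F_def\<close>)
      show "ff q gam del k eps lh = 0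
           \<and> (\<forall>l\<in>interior (Lam q gam). ff q gam del k eps l = 0 \<longrightarrow> l = lh)
           \<and> What q gam del k eps = Wcirc q gam del k eps
           \<and> Wcirc q gam del k eps = {wfun q gam del eps lh}"
        using lh(2) uniq WE Wh unfolding I_def F_def by simp
      show "lh \<in> interior (Lam q gam)" using lh(1) unfolding I_def .
    qed
  next
    assume h: "f_inf q gam del k eps = 0 \<and> f_sup q gam del k eps = 0"
    have all0: "\<And>l. l \<in> I \<Longrightarrow> F l = 0"
    proof -
      fix l assume l: "l \<in> I"
      have "(INF l\<in>I. ereal (F l)) \<le> ereal (F l)" by (rule INF_lower) (rule l)
      moreover have "ereal (F l) \<le> (SUP l\<in>I. ereal (F l))" by (rule SUP_upper) (rule l)
      ultimately show "F l = 0" using h unfolding finf fsup by (simp add: order_antisym)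
    qed
    have d: deg
    proof (rule ccontr)
      assume nd: "\<not> deg"
      obtain e where e: "e > 0" "0 - e \<in> I" "0 + e \<in> I"
        using I_ball zI unfolding I_def by blast
      show False using strict[OF nd e(2) e(3)] e(1) all0[OF e(2)] all0[OF e(3)] by simp
    qed
    have w0: "wfun q gam del eps 0 = (\<lambda>_. 0)"
      using d by (auto simp: deg_def wfun_def wz_def dvec_def idx_def)
    have Wh: "Wcirc q gam del k eps = {(\<lambda>_. 0)}"
    proof -
      have "\<And>l. wfun q gam del eps l = (\<lambda>_. 0)"
        using d by (auto simp: deg_def wfun_def wz_def dvec_def idx_def)
      then show ?thesis unfolding Wc using zI all0 by auto
    qed
    show "\<forall>l\<in>interior (Lam q gam). ff q gam del k eps l = 0"
      using all0 unfolding I_def F_def by blast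
    show "What q gam del k eps = Wcirc q gam del k eps"
      using What_eq[OF pos[OF zI], of del k eps] all0[OF zI] w0 Wh unfolding F_def by simp
    show "Wcirc q gam del k eps = {(\<lambda>_. 0)}" by (rule Wh)
  next
    assume h: "\<not> (f_inf q gam del k eps < 0 \<and> 0 < f_sup q gam del k eps)
       \<and> \<not> (f_inf q gam del k eps = 0 \<and> f_sup q gam del k eps = 0)"
    have nz: "\<And>l. l \<in> I \<Longrightarrow> F l \<noteq> 0"
      using h nd_zero deg_zero by blast
    show "\<forall>l\<in>interior (Lam q gam). ff q gam del k eps l \<noteq> 0"
      using nz unfolding I_def F_def by blast
    show "Wcirc q gam del k eps = {}" unfolding Wc using nz by auto
  qed
qed

end
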